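(* For every $k \ge 3$, the space $\mathrm{Conf}_2(B_k)$ is homotopy equivalent to a connected graph whose first Betti number is at least $k-1$.
   Context: The banana graph $B_k$ is the graph with two vertices connected by $k$ edges. $\mathrm{Conf}_n(X)=\{(x_1,\dots,x_n)\in X^n : x_i\neq x_j \text{ for } i\neq j\}$. *)

theory Defs
  imports "HOL-Analysis.Analysis"
begin

text \<open>Geometric realization of the banana graph B_k in the complex plane:
  two vertices -1 and 1, and for each j < k an edge which is the polygonal arc
  from -1 through j*i to 1.  Distinct arcs meet only at the two endpoints.\<close>
definition banana :: "nat \<Rightarrow> complex set" where
  "banana k = (\<Union>j<k. closed_segment (-1) (of_nat j * \<i>) \<union> closed_segment (of_nat j * \<i>) 1)"

definition Conf :: "nat \<Rightarrow> 'a topology \<Rightarrow> (nat \<Rightarrow> 'a) topology" where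
  "Conf n X = subtopology (product_topology (\<lambda>_. X) {..<n})
     {x \<in> topspace (product_topology (\<lambda>_. X) {..<n}). \<forall>i<n. \<forall>j<n. i \<noteq> j \<longrightarrow> x i \<noteq> x j}"

text \<open>A finite multigraph (loops and multiple edges allowed): a finite vertex set
  V of naturals and a list E of edges (pairs of endpoints).\<close>
definition fin_graph :: "nat set \<Rightarrow> (nat \<times> nat) list \<Rightarrow> bool" where
  "fin_graph V E \<longleftrightarrow> finite V \<and> (\<forall>(u,v)\<in>set E. u \<in> V \<and> v \<in> V)"

text \<open>Disjoint union of the edge intervals (edge i is {2i} \<times> [0,1]) and the
  vertices (vertex v is the point (2v+1, 0)).\<close>
definition graph_cells :: "nat set \<Rightarrow> (nat \<times> nat) list \<Rightarrow> (nat \<times> real) set" where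
  "graph_cells V E = {(2 * i, t) | i t. i < length E \<and> 0 \<le> t \<and> t \<le> 1} \<union> (\<lambda>v. (2 * v + 1, 0)) ` V"

definition graph_cells_top :: "nat set \<Rightarrow> (nat \<times> nat) list \<Rightarrow> (nat \<times> real) topology" where
  "graph_cells_top V E = subtopology (prod_topology (discrete_topology UNIV) euclideanreal) (graph_cells V E)"

definition graph_glue :: "(nat \<times> nat) list \<Rightarrow> nat \<times> real \<Rightarrow> nat \<times> real" where
  "graph_glue E p = (let n = fst p; t = snd p in
     if even n \<and> n div 2 < length E \<and> t = 0 then (2 * fst (E ! (n div 2)) + 1, 0)
     else if even n \<and> n div 2 < length E \<and> t = 1 then (2 * snd (E ! (n div 2)) + 1, 0)
     else p)"

definition quotient_topology :: "'a topology \<Rightarrow> ('a \<Rightarrow> 'b) \<Rightarrow> 'b topology" where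
  "quotient_topology X f = topology (\<lambda>U. U \<subseteq> f ` topspace X \<and> openin X {x \<in> topspace X. f x \<in> U})"

lemma istopology_quotient:
  "istopology (\<lambda>U. U \<subseteq> f ` topspace X \<and> openin X {x \<in> topspace X. f x \<in> U})"
  unfolding istopology_def
proof (intro conjI allI impI ballI)
  fix S T assume a: "S \<subseteq> f ` topspace X \<and> openin X {x \<in> topspace X. f x \<in> S}"
    "T \<subseteq> f ` topspace X \<and> openin X {x \<in> topspace X. f x \<in> T}"
  show "S \<inter> T \<subseteq> f ` topspace X" using a by blast
  have "{x \<in> topspace X. f x \<in> S \<inter> T} = {x \<in> topspace X. f x \<in> S} \<inter> {x \<in> topspace X. f x \<in> T}" by blast
  then show "openin X {x \<in> topspace X. f x \<in> S \<inter> T}" using a by auto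
next
  fix K assume a: "\<forall>U\<in>K. U \<subseteq> f ` topspace X \<and> openin X {x \<in> topspace X. f x \<in> U}"
  show "\<Union>K \<subseteq> f ` topspace X" using a by blast
  have "{x \<in> topspace X. f x \<in> \<Union>K} = (\<Union>U\<in>K. {x \<in> topspace X. f x \<in> U})" by blast
  then show "openin X {x \<in> topspace X. f x \<in> \<Union>K}" using a by auto
qed

lemma openin_quotient_topology:
  "openin (quotient_topology X f) U \<longleftrightarrow> U \<subseteq> f ` topspace X \<and> openin X {x \<in> topspace X. f x \<in> U}"
  unfolding quotient_topology_def by (simp only: topology_inverse'[OF istopology_quotient])

definition graph_realization :: "nat set \<Rightarrow> (nat \<times> nat) list \<Rightarrow> (nat \<times> real) topology" where
  "graph_realization V E = quotient_topology (graph_cells_top V E) (graph_glue E)"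

definition graph_betti1 :: "nat set \<Rightarrow> (nat \<times> nat) list \<Rightarrow> int" where
  "graph_betti1 V E = int (length E) - int (card V)
     + int (card (connected_components_of (graph_realization V E)))"

end

theory Submission
  imports Defs
begin


definition Xa :: "nat \<Rightarrow> real \<Rightarrow> complex" where
  "Xa i p = complex_of_real p + \<i> * complex_of_real (real i * (1 - \<bar>p\<bar>))"

definition arc :: "nat \<Rightarrow> complex set" where "arc i = Xa i ` {-1..1}"

lemma Re_Xa[simp]: "Re (Xa i p) = p" and Im_Xa[simp]: "Im (Xa i p) = real i * (1 - \<bar>p\<bar>)"
  by (simp_all add: Xa_def)

lemma Xa_m1[simp]: "Xa i (-1) = -1" and Xa_1[simp]: "Xa i 1 = 1"
  by (simp_all add: Xa_def)

lemma Xa_vertex: "\<bar>p\<bar> = 1 \<Longrightarrow> Xa i p = complex_of_real p"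
  by (simp add: Xa_def)

lemma arc_iff: "z \<in> arc i \<longleftrightarrow> -1 \<le> Re z \<and> Re z \<le> 1 \<and> Im z = real i * (1 - \<bar>Re z\<bar>)"
proof
  assume "z \<in> arc i" then show "-1 \<le> Re z \<and> Re z \<le> 1 \<and> Im z = real i * (1 - \<bar>Re z\<bar>)"
    by (auto simp: arc_def)
next
  assume a: "-1 \<le> Re z \<and> Re z \<le> 1 \<and> Im z = real i * (1 - \<bar>Re z\<bar>)"
  then have "z = Xa i (Re z)" by (intro complex_eqI) auto
  then show "z \<in> arc i" using a unfolding arc_def by (metis atLeastAtMost_iff image_eqI)
qed

lemma arc_eq: "z \<in> arc i \<Longrightarrow> Xa i (Re z) = z"
  by (intro complex_eqI) (auto simp: arc_iff)

lemma Xa_in_arc: "-1 \<le> p \<Longrightarrow> p \<le> 1 \<Longrightarrow> Xa i p \<in> arc i"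
  by (auto simp: arc_def)

lemma arc_two: "z \<in> arc i \<Longrightarrow> z \<in> arc j \<Longrightarrow> i \<noteq> j \<Longrightarrow> \<bar>Re z\<bar> = 1"
proof -
  assume a: "z \<in> arc i" "z \<in> arc j" "i \<noteq> j"
  then have "real i * (1 - \<bar>Re z\<bar>) = real j * (1 - \<bar>Re z\<bar>)" by (auto simp: arc_iff)
  then have "(real i - real j) * (1 - \<bar>Re z\<bar>) = 0" by (simp add: algebra_simps)
  with a(3) show ?thesis by auto
qed

lemma arc_same: "z \<in> arc i \<Longrightarrow> w \<in> arc i \<Longrightarrow> Re z = Re w \<Longrightarrow> z = w"
  by (intro complex_eqI) (auto simp: arc_iff)

lemma arc_Re: "z \<in> arc i \<Longrightarrow> -1 \<le> Re z \<and> Re z \<le> 1"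
  by (auto simp: arc_iff)

lemma continuous_Xa[continuous_intros]:
  "continuous_on S f \<Longrightarrow> continuous_on S (\<lambda>x. Xa i (f x))"
  unfolding Xa_def by (intro continuous_intros)

lemma compact_arc: "compact (arc i)"
  unfolding arc_def by (intro compact_continuous_image continuous_Xa continuous_on_id) auto

lemma closed_arc: "closed (arc i)"
  by (simp add: compact_arc compact_imp_closed)

lemma seg_eq: "closed_segment (-1) (of_nat j * \<i>) \<union> closed_segment (of_nat j * \<i>) 1 = arc j"
proof (intro equalityI subsetI)
  fix z assume "z \<in> closed_segment (-1) (of_nat j * \<i>) \<union> closed_segment (of_nat j * \<i>) 1"
  then show "z \<in> arc j"
  proof
    assume "z \<in> closed_segment (-1) (of_nat j * \<i>)"
    then obtain u where u: "0 \<le> u" "u \<le> 1" "z = (1 - u) *\<^sub>R (-1) + u *\<^sub>R (of_nat j * \<i>)"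
      by (auto simp: closed_segment_def)
    have "Re z = u - 1" "Im z = real j * u" using u(3) by (simp_all add: scaleR_conv_of_real)
    then show ?thesis using u by (auto simp: arc_iff)
  next
    assume "z \<in> closed_segment (of_nat j * \<i>) 1"
    then obtain u where u: "0 \<le> u" "u \<le> 1" "z = (1 - u) *\<^sub>R (of_nat j * \<i>) + u *\<^sub>R 1"
      by (auto simp: closed_segment_def)
    have "Re z = u" "Im z = real j * (1 - u)" using u(3) by (simp_all add: scaleR_conv_of_real)
    then show ?thesis using u by (auto simp: arc_iff)
  qed
next
  fix z assume "z \<in> arc j"
  then have z: "-1 \<le> Re z" "Re z \<le> 1" "Im z = real j * (1 - \<bar>Re z\<bar>)" by (auto simp: arc_iff)
  show "z \<in> closed_segment (-1) (of_nat j * \<i>) \<union> closed_segment (of_nat j * \<i>) 1"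
  proof (cases "Re z \<le> 0")
    case True
    have "z = (1 - (Re z + 1)) *\<^sub>R (-1) + (Re z + 1) *\<^sub>R (of_nat j * \<i>)"
      using z True by (intro complex_eqI) (auto simp: algebra_simps)
    then have "z \<in> closed_segment (-1) (of_nat j * \<i>)"
      unfolding closed_segment_def using z True by (intro CollectI exI[of _ "Re z + 1"]) auto
    then show ?thesis by blast
  next
    case False
    have "z = (1 - Re z) *\<^sub>R (of_nat j * \<i>) + (Re z) *\<^sub>R 1"
      using z False by (intro complex_eqI) (auto simp: algebra_simps)
    then have "z \<in> closed_segment (of_nat j * \<i>) 1"
      unfolding closed_segment_def using z False by (intro CollectI exI[of _ "Re z"]) auto
    then show ?thesis by blast
  qed
qed

lemma banana_eq: "banana k = (\<Union>j<k. arc j)"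
  unfolding banana_def seg_eq ..



definition dL :: "real \<Rightarrow> real \<Rightarrow> real" where "dL p q = min (p+1) (1-q)"
definition dR :: "real \<Rightarrow> real \<Rightarrow> real" where "dR p q = min (1-p) (q+1)"
definition phi :: "real \<Rightarrow> real \<Rightarrow> real" where "phi p q = dL p q / (dL p q + dR p q)"

definition tgt :: "nat \<Rightarrow> real \<Rightarrow> real \<Rightarrow> real \<times> real" where
  "tgt m p q = (if m = 0 then (2 * phi p q - 1, 1 - 2 * phi p q) else if m = 1 then (-1,1) else (1,-1))"

definition lin :: "real \<Rightarrow> real \<Rightarrow> real \<Rightarrow> real" where "lin l a b = (1-l)*a + l*b"

locale pq =
  fixes p q :: real
  assumes p: "-1 \<le> p" "p \<le> 1" and q: "-1 \<le> q" "q \<le> 1"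
    and ne1: "\<not> (p = -1 \<and> q = -1)" and ne2: "\<not> (p = 1 \<and> q = 1)"
begin
lemma dpos: "dL p q + dR p q > 0" "dL p q \<ge> 0" "dR p q \<ge> 0"
  using p q ne1 ne2 by (auto simp: dL_def dR_def min_def)
lemma phi_01: "0 \<le> phi p q" "phi p q \<le> 1"
  using dpos by (auto simp: phi_def divide_simps)
lemma phi0: "p = -1 \<or> q = 1 \<Longrightarrow> phi p q = 0"
  using p q by (auto simp: phi_def dL_def min_def)
lemma phi1: "p = 1 \<or> q = -1 \<Longrightarrow> phi p q = 1"
  using p q ne1 ne2 dpos by (auto simp: phi_def dR_def dL_def min_def divide_simps)
end



definition Idx :: "nat \<Rightarrow> (nat \<times> nat \<times> nat) set" where
  "Idx k = {(i,j,m). i<k \<and> j<k \<and> ((i\<noteq>j \<and> m=0) \<or> (i=j \<and> (m=1 \<or> m=2)))}"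

definition inP :: "nat \<Rightarrow> nat \<Rightarrow> nat \<Rightarrow> complex \<Rightarrow> complex \<Rightarrow> bool" where
  "inP i j m x y \<longleftrightarrow> x \<in> arc i \<and> y \<in> arc j \<and> (m=1 \<longrightarrow> Re x \<le> Re y) \<and> (m=2 \<longrightarrow> Re y \<le> Re x)"

lemma finite_Idx: "finite (Idx k)"
proof -
  have "Idx k \<subseteq> {..<k} \<times> {..<k} \<times> {..<3}" by (auto simp: Idx_def)
  then show ?thesis by (rule finite_subset) auto
qed

lemma vert_eq: "x \<in> arc i \<Longrightarrow> \<bar>Re x\<bar> = 1 \<Longrightarrow> x = complex_of_real (Re x)"
  using arc_eq Xa_vertex by metis

lemma piece_pq:
  assumes "inP i j m x y" "x \<noteq> y"
  shows "pq (Re x) (Re y)"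
proof -
  have x: "x \<in> arc i" and y: "y \<in> arc j" using assms by (auto simp: inP_def)
  show ?thesis
  proof
    show "\<not> (Re x = -1 \<and> Re y = -1)" "\<not> (Re x = 1 \<and> Re y = 1)"
      using vert_eq[OF x] vert_eq[OF y] assms(2) by fastforce+
  qed (use arc_Re[OF x] arc_Re[OF y] in auto)
qed

lemma piece_lt:
  assumes "(i,j,m) \<in> Idx k" "inP i j m x y" "x \<noteq> y"
  shows "m = 1 \<Longrightarrow> Re x < Re y" "m = 2 \<Longrightarrow> Re y < Re x"
  using assms arc_same by (fastforce simp: Idx_def inP_def)+

lemma tgt_vertex:
  assumes "(i,j,m) \<in> Idx k" "inP i j m x y" "x \<noteq> y"
  shows "\<bar>Re x\<bar> = 1 \<Longrightarrow> fst (tgt m (Re x) (Re y)) = Re x"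
    and "\<bar>Re y\<bar> = 1 \<Longrightarrow> snd (tgt m (Re x) (Re y)) = Re y"
proof -
  interpret pq "Re x" "Re y" using piece_pq assms by blast
  have lt: "m = 1 \<Longrightarrow> Re x < Re y" "m = 2 \<Longrightarrow> Re y < Re x" using piece_lt assms by blast+
  have m: "m = 0 \<or> m = 1 \<or> m = 2" using assms by (auto simp: Idx_def)
  show "\<bar>Re x\<bar> = 1 \<Longrightarrow> fst (tgt m (Re x) (Re y)) = Re x"
    using m lt phi0 phi1 p q by (auto simp: tgt_def abs_if split: if_splits)
  show "\<bar>Re y\<bar> = 1 \<Longrightarrow> snd (tgt m (Re x) (Re y)) = Re y"
    using m lt phi0 phi1 p q by (auto simp: tgt_def abs_if split: if_splits)
qed

lemma tgt_range:
  assumes "(i,j,m) \<in> Idx k" "inP i j m x y" "x \<noteq> y"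
  shows "-1 \<le> fst (tgt m (Re x) (Re y))" "fst (tgt m (Re x) (Re y)) \<le> 1"
        "-1 \<le> snd (tgt m (Re x) (Re y))" "snd (tgt m (Re x) (Re y)) \<le> 1"
proof -
  interpret pq "Re x" "Re y" using piece_pq assms by blast
  show "-1 \<le> fst (tgt m (Re x) (Re y))" "fst (tgt m (Re x) (Re y)) \<le> 1"
        "-1 \<le> snd (tgt m (Re x) (Re y))" "snd (tgt m (Re x) (Re y)) \<le> 1"
    using phi_01 by (auto simp: tgt_def)
qed

lemma tgt_agree:
  assumes "(i,j,m) \<in> Idx k" "inP i j m x y" "(i',j',m') \<in> Idx k" "inP i' j' m' x y" "x \<noteq> y"
  shows "tgt m (Re x) (Re y) = tgt m' (Re x) (Re y)"
proof -
  interpret pq "Re x" "Re y" using piece_pq assms by blast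
  have lt: "m = 1 \<Longrightarrow> Re x < Re y" "m = 2 \<Longrightarrow> Re y < Re x"
    "m' = 1 \<Longrightarrow> Re x < Re y" "m' = 2 \<Longrightarrow> Re y < Re x" using piece_lt assms by blast+
  have x: "x \<in> arc i" "x \<in> arc i'" and y: "y \<in> arc j" "y \<in> arc j'"
    using assms by (auto simp: inP_def)
  have vx: "i \<noteq> i' \<Longrightarrow> \<bar>Re x\<bar> = 1" using arc_two x by blast
  have vy: "j \<noteq> j' \<Longrightarrow> \<bar>Re y\<bar> = 1" using arc_two y by blast
  have c: "m = m' \<or> (m = 0 \<and> m' = 1 \<and> i \<noteq> j \<and> i' = j') \<or> (m = 0 \<and> m' = 2 \<and> i \<noteq> j \<and> i' = j')
     \<or> (m' = 0 \<and> m = 1 \<and> i' \<noteq> j' \<and> i = j) \<or> (m' = 0 \<and> m = 2 \<and> i' \<noteq> j' \<and> i = j)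
     \<or> (m = 1 \<and> m' = 2) \<or> (m = 2 \<and> m' = 1)"
    using assms(1,3) by (auto simp: Idx_def)
  have A: "Re x < Re y \<Longrightarrow> (\<bar>Re x\<bar> = 1 \<or> \<bar>Re y\<bar> = 1) \<Longrightarrow> phi (Re x) (Re y) = 0"
    using phi0 p q by (cases "Re x < 0"; cases "Re y < 0"; simp add: abs_if)
  have B: "Re y < Re x \<Longrightarrow> (\<bar>Re x\<bar> = 1 \<or> \<bar>Re y\<bar> = 1) \<Longrightarrow> phi (Re x) (Re y) = 1"
    using phi1 p q by (cases "Re x < 0"; cases "Re y < 0"; simp add: abs_if)
  from c show ?thesis
  proof (elim disjE conjE)
    assume "m = 0" "m' = 1" "i \<noteq> j" "i' = j'"
    then have "\<bar>Re x\<bar> = 1 \<or> \<bar>Re y\<bar> = 1" using vx vy by metis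
    then show ?thesis using A lt \<open>m = 0\<close> \<open>m' = 1\<close> by (simp add: tgt_def)
  next
    assume "m = 0" "m' = 2" "i \<noteq> j" "i' = j'"
    then have "\<bar>Re x\<bar> = 1 \<or> \<bar>Re y\<bar> = 1" using vx vy by metis
    then show ?thesis using B lt \<open>m = 0\<close> \<open>m' = 2\<close> by (simp add: tgt_def)
  next
    assume "m' = 0" "m = 1" "i' \<noteq> j'" "i = j"
    then have "\<bar>Re x\<bar> = 1 \<or> \<bar>Re y\<bar> = 1" using vx vy by metis
    then show ?thesis using A lt \<open>m' = 0\<close> \<open>m = 1\<close> by (simp add: tgt_def)
  next
    assume "m' = 0" "m = 2" "i' \<noteq> j'" "i = j"
    then have "\<bar>Re x\<bar> = 1 \<or> \<bar>Re y\<bar> = 1" using vx vy by metis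
    then show ?thesis using B lt \<open>m' = 0\<close> \<open>m = 2\<close> by (simp add: tgt_def)
  qed (use lt in auto)
qed



definition Fp :: "nat \<Rightarrow> nat \<Rightarrow> nat \<Rightarrow> real \<times> complex \<times> complex \<Rightarrow> complex \<times> complex" where
  "Fp i j m z = (Xa i (lin (fst z) (Re (fst (snd z))) (fst (tgt m (Re (fst (snd z))) (Re (snd (snd z)))))),
                 Xa j (lin (fst z) (Re (snd (snd z))) (snd (tgt m (Re (fst (snd z))) (Re (snd (snd z)))))))"

definition Sc :: "nat \<Rightarrow> (complex \<times> complex) set" where
  "Sc k = {z. fst z \<in> banana k \<and> snd z \<in> banana k \<and> fst z \<noteq> snd z}"

definition Pc :: "nat \<Rightarrow> nat \<Rightarrow> nat \<Rightarrow> (complex \<times> complex) set" where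
  "Pc i j m = {z. inP i j m (fst z) (snd z)}"

lemma closed_Pc: "closed (Pc i j m)"
proof -
  have e: "Pc i j m = (arc i \<times> arc j) \<inter> {z. m = 1 \<longrightarrow> Re (fst z) \<le> Re (snd z)} \<inter> {z. m = 2 \<longrightarrow> Re (snd z) \<le> Re (fst z)}"
    by (auto simp: Pc_def inP_def)
  have c1: "closed {z::complex\<times>complex. m = 1 \<longrightarrow> Re (fst z) \<le> Re (snd z)}"
    by (cases "m = 1") (auto intro!: closed_Collect_le continuous_intros)
  have c2: "closed {z::complex\<times>complex. m = 2 \<longrightarrow> Re (snd z) \<le> Re (fst z)}"
    by (cases "m = 2") (auto intro!: closed_Collect_le continuous_intros)
  show ?thesis unfolding e
    by (intro closed_Int closed_Times closed_arc c1 c2)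
qed

lemma cont_tgt:
  assumes "(i,j,m) \<in> Idx k"
  shows "continuous_on (({0..1} \<times> Sc k) \<inter> ({0..1} \<times> Pc i j m)) (\<lambda>z. tgt m (Re (fst (snd z))) (Re (snd (snd z))))"
proof (cases "m = 0")
  case True
  have nz: "\<forall>z\<in>({0..1} \<times> Sc k) \<inter> ({0..1} \<times> Pc i j m). dL (Re (fst (snd z))) (Re (snd (snd z))) + dR (Re (fst (snd z))) (Re (snd (snd z))) \<noteq> 0"
  proof
    fix z assume "z \<in> ({0..1} \<times> Sc k) \<inter> ({0..1} \<times> Pc i j m)"
    then have "inP i j m (fst (snd z)) (snd (snd z))" "fst (snd z) \<noteq> snd (snd z)"
      by (auto simp: Sc_def Pc_def)
    then interpret pq "Re (fst (snd z))" "Re (snd (snd z))" using piece_pq by blast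
    show "dL (Re (fst (snd z))) (Re (snd (snd z))) + dR (Re (fst (snd z))) (Re (snd (snd z))) \<noteq> 0"
      using dpos by simp
  qed
  show ?thesis using True nz unfolding tgt_def phi_def
    by (simp add: dL_def dR_def) (intro continuous_intros; simp)
qed (simp add: tgt_def continuous_on_const)

lemma cont_Fp:
  assumes "(i,j,m) \<in> Idx k"
  shows "continuous_on (({0..1} \<times> Sc k) \<inter> ({0..1} \<times> Pc i j m)) (Fp i j m)"
  using cont_tgt[OF assms] unfolding Fp_def lin_def
  by (intro continuous_intros) auto



definition Gc :: "nat \<Rightarrow> (complex \<times> complex) set" where
  "Gc k = {(Xa i u, Xa j (-u)) | i j u. i<k \<and> j<k \<and> i\<noteq>j \<and> -1\<le>u \<and> u\<le>1}"

lemma banana_arc: "x \<in> banana k \<longleftrightarrow> (\<exists>i<k. x \<in> arc i)"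
  by (auto simp: banana_eq)

lemma cover:
  assumes "w \<in> Sc k"
  shows "\<exists>i j m. (i,j,m) \<in> Idx k \<and> w \<in> Pc i j m"
proof -
  obtain i j where ij: "i<k" "j<k" "fst w \<in> arc i" "snd w \<in> arc j"
    using assms by (auto simp: Sc_def banana_arc)
  show ?thesis
  proof (cases "i = j")
    case False
    then show ?thesis using ij by (intro exI[of _ i] exI[of _ j] exI[of _ 0]) (auto simp: Idx_def Pc_def inP_def)
  next
    case True
    show ?thesis
    proof (cases "Re (fst w) \<le> Re (snd w)")
      case c: True
      then show ?thesis using ij True by (intro exI[of _ i] exI[of _ j] exI[of _ 1]) (auto simp: Idx_def Pc_def inP_def)
    next
      case c: False
      then show ?thesis using ij True by (intro exI[of _ i] exI[of _ j] exI[of _ 2]) (auto simp: Idx_def Pc_def inP_def)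
    qed
  qed
qed

lemma lin_same[simp]: "lin l a a = a"
  by (simp add: lin_def algebra_simps)

lemma lin_range:
  assumes "-1 \<le> a" "a \<le> 1" "-1 \<le> b" "b \<le> 1" "0 \<le> l" "l \<le> 1"
  shows "-1 \<le> lin l a b" "lin l a b \<le> 1"
proof -
  have "(1-l)*(-1) \<le> (1-l)*a" "(1-l)*a \<le> (1-l)*1" "l*(-1) \<le> l*b" "l*b \<le> l*1"
    using assms by (intro mult_left_mono; simp)+
  then show "-1 \<le> lin l a b" "lin l a b \<le> 1" by (simp_all add: lin_def algebra_simps)
qed

lemma agree:
  assumes "(i,j,m) \<in> Idx k" "(i',j',m') \<in> Idx k" "w \<in> Sc k" "w \<in> Pc i j m" "w \<in> Pc i' j' m'"
  shows "Fp i j m (l,w) = Fp i' j' m' (l,w)"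
proof -
  obtain x y where w: "w = (x,y)" by fastforce
  have P: "inP i j m x y" "inP i' j' m' x y" "x \<noteq> y" using assms w by (auto simp: Pc_def Sc_def)
  have T: "tgt m (Re x) (Re y) = tgt m' (Re x) (Re y)" using tgt_agree assms(1,2) P by blast
  have x: "x \<in> arc i" "x \<in> arc i'" and y: "y \<in> arc j" "y \<in> arc j'" using P by (auto simp: inP_def)
  have "Xa i (lin l (Re x) (fst (tgt m (Re x) (Re y)))) = Xa i' (lin l (Re x) (fst (tgt m (Re x) (Re y))))"
  proof (cases "i = i'")
    case False
    then have v: "\<bar>Re x\<bar> = 1" using arc_two x by blast
    then have "fst (tgt m (Re x) (Re y)) = Re x" using tgt_vertex(1)[OF assms(1) P(1) P(3)] by blast
    then show ?thesis using v by (simp add: Xa_vertex)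
  qed simp
  moreover have "Xa j (lin l (Re y) (snd (tgt m (Re x) (Re y)))) = Xa j' (lin l (Re y) (snd (tgt m (Re x) (Re y))))"
  proof (cases "j = j'")
    case False
    then have v: "\<bar>Re y\<bar> = 1" using arc_two y by blast
    then have "snd (tgt m (Re x) (Re y)) = Re y" using tgt_vertex(2)[OF assms(1) P(1) P(3)] by blast
    then show ?thesis using v by (simp add: Xa_vertex)
  qed simp
  ultimately show ?thesis using T by (simp add: Fp_def w)
qed

lemma pasted:
  obtains g where "continuous_on ({0..1} \<times> Sc k) g"
    "\<And>i j m z. (i,j,m) \<in> Idx k \<Longrightarrow> z \<in> {0..1} \<times> Sc k \<Longrightarrow> snd z \<in> Pc i j m \<Longrightarrow> g z = Fp i j m z"
proof -
  let ?D = "{0..1::real} \<times> Sc k"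
  let ?T = "\<lambda>(i,j,m). ?D \<inter> ({0..1} \<times> Pc i j m)"
  let ?f = "\<lambda>(i,j,m). Fp i j m"
  obtain g where g: "continuous_map (top_of_set ?D) euclidean g"
    "\<And>x idx. \<lbrakk>idx \<in> Idx k; x \<in> topspace (top_of_set ?D) \<inter> ?T idx\<rbrakk> \<Longrightarrow> g x = ?f idx x"
  proof (rule pasting_lemma_exists_closed[of "Idx k" "top_of_set ?D" ?T euclidean ?f])
    show "finite (Idx k)" by (rule finite_Idx)
    show "topspace (top_of_set ?D) \<subseteq> \<Union> (?T ` Idx k)"
    proof
      fix z assume "z \<in> topspace (top_of_set ?D)"
      then have z: "z \<in> ?D" by simp
      then obtain i j m where "(i,j,m) \<in> Idx k" "snd z \<in> Pc i j m" using cover[of "snd z" k] by auto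
      then show "z \<in> \<Union> (?T ` Idx k)" using z by (intro UN_I[of "(i,j,m)"]) (auto simp: mem_Times_iff)
    qed
    fix idx assume idx: "idx \<in> Idx k"
    then obtain i j m where e: "idx = (i,j,m)" by (cases idx) auto
    show "closedin (top_of_set ?D) (?T idx)"
      unfolding e by (auto intro!: closedin_closed_Int closed_Times closed_Pc)
    show "continuous_map (subtopology (top_of_set ?D) (?T idx)) euclidean (?f idx)"
      using cont_Fp[of i j m k] idx e by (simp add: subtopology_subtopology)
  next
    fix idx idx' z assume a: "idx \<in> Idx k" "idx' \<in> Idx k" "z \<in> topspace (top_of_set ?D) \<inter> ?T idx \<inter> ?T idx'"
    obtain i j m where e: "idx = (i,j,m)" by (cases idx) auto
    obtain i' j' m' where e': "idx' = (i',j',m')" by (cases idx') auto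
    obtain l w where z: "z = (l,w)" by (metis surj_pair)
    show "?f idx z = ?f idx' z" using a agree[of i j m k i' j' m' w l] by (auto simp: e e' z)
  qed blast
  show ?thesis
  proof (rule that)
    show "continuous_on ?D g" using g(1) by simp
    fix i j m z assume "(i,j,m) \<in> Idx k" "z \<in> ?D" "snd z \<in> Pc i j m"
    then show "g z = Fp i j m z" using g(2)[of "(i,j,m)" z] by (auto simp: mem_Times_iff)
  qed
qed



lemma real_no_meet:
  fixes p q l f :: real
  assumes "pq p q" "0 \<le> l" "l \<le> 1" "0 \<le> f" "f \<le> 1"
    and e: "(1-l)*p + l*(2*f-1) = (1-l)*q + l*(1-2*f)" "\<bar>(1-l)*p + l*(2*f-1)\<bar> = 1"
  shows False
proof -
  interpret pq p q by fact
  have a: "(1-l)*(p+1) \<ge> 0" "(1-l)*(q+1) \<ge> 0" "(1-l)*(1-p) \<ge> 0" "(1-l)*(1-q) \<ge> 0" "l*f \<ge> 0" "l*(1-f) \<ge> 0"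
    using p q assms by (auto intro!: mult_nonneg_nonneg)
  show False
  proof (cases "l = 1")
    case True then show ?thesis using e by auto
  next
    case False
    then have l: "1 - l > 0" using assms by auto
    show ?thesis
    proof (cases "(1-l)*p + l*(2*f-1) = -1")
      case True
      then have "(1-l)*(p+1) + 2*(l*f) = 0" "(1-l)*(q+1) + 2*(l*(1-f)) = 0" using e
        by (simp_all add: algebra_simps)
      then have "(1-l)*(p+1) = 0" "(1-l)*(q+1) = 0" using a by linarith+
      then show ?thesis using l ne1 by auto
    next
      case False
      then have T: "(1-l)*p + l*(2*f-1) = 1" using e by auto
      then have "(1-l)*(1-p) + 2*(l*(1-f)) = 0" "(1-l)*(1-q) + 2*(l*f) = 0" using e
        by (simp_all add: algebra_simps)
      then have "(1-l)*(1-p) = 0" "(1-l)*(1-q) = 0" using a by linarith+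
      then show ?thesis using l ne2 by auto
    qed
  qed
qed

lemma Fp_in:
  assumes idx: "(i,j,m) \<in> Idx k" and l: "0 \<le> l" "l \<le> 1" and w: "w \<in> Sc k" "w \<in> Pc i j m"
  shows "Fp i j m (l,w) \<in> Sc k"
proof -
  obtain x y where we: "w = (x,y)" by fastforce
  have P: "inP i j m x y" "x \<noteq> y" using w we by (auto simp: Pc_def Sc_def)
  interpret pq "Re x" "Re y" using piece_pq P by blast
  have ik: "i < k" "j < k" using idx by (auto simp: Idx_def)
  have tr: "-1 \<le> fst (tgt m (Re x) (Re y))" "fst (tgt m (Re x) (Re y)) \<le> 1"
        "-1 \<le> snd (tgt m (Re x) (Re y))" "snd (tgt m (Re x) (Re y)) \<le> 1"
    using tgt_range[OF idx P] by auto
  define p' where "p' = lin l (Re x) (fst (tgt m (Re x) (Re y)))"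
  define q' where "q' = lin l (Re y) (snd (tgt m (Re x) (Re y)))"
  have r: "-1 \<le> p'" "p' \<le> 1" "-1 \<le> q'" "q' \<le> 1"
    unfolding p'_def q'_def using lin_range tr p q l by auto
  have F: "Fp i j m (l,w) = (Xa i p', Xa j q')" by (simp add: Fp_def p'_def q'_def we)
  have inb: "Xa i p' \<in> banana k" "Xa j q' \<in> banana k"
    using r ik Xa_in_arc by (auto simp: banana_arc)
  have ne: "Xa i p' \<noteq> Xa j q'"
  proof
    assume eq: "Xa i p' = Xa j q'"
    then have pq': "p' = q'" using Re_Xa by metis
    have m: "m = 0 \<or> m = 1 \<or> m = 2" using idx by (auto simp: Idx_def)
    then show False
    proof (elim disjE)
      assume m0: "m = 0"
      then have "i \<noteq> j" using idx by (auto simp: Idx_def)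
      moreover have "Xa i p' \<in> arc i" "Xa i p' \<in> arc j" using eq r Xa_in_arc by metis+
      ultimately have "\<bar>Re (Xa i p')\<bar> = 1" using arc_two by blast
      then have "\<bar>p'\<bar> = 1" by simp
      then show False using real_no_meet[of "Re x" "Re y" l "phi (Re x) (Re y)"] pq' phi_01 l
        pq_axioms by (simp add: p'_def q'_def m0 tgt_def lin_def)
    next
      assume m1: "m = 1"
      then have "Re x < Re y" using piece_lt idx P by blast
      moreover have "q' - p' = (1-l)*(Re y - Re x) + 2*l"
        by (simp add: p'_def q'_def m1 tgt_def lin_def algebra_simps)
      moreover have "(1-l)*(Re y - Re x) \<ge> 0" using l calculation by (auto intro!: mult_nonneg_nonneg)
      ultimately have "q' - p' > 0 \<or> l = 0" using l by (smt (verit))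
      then show False using pq' \<open>Re x < Re y\<close> by (auto simp: p'_def q'_def lin_def)
    next
      assume m2: "m = 2"
      then have "Re y < Re x" using piece_lt idx P by blast
      moreover have "p' - q' = (1-l)*(Re x - Re y) + 2*l"
        by (simp add: p'_def q'_def m2 tgt_def lin_def algebra_simps)
      moreover have "(1-l)*(Re x - Re y) \<ge> 0" using l calculation by (auto intro!: mult_nonneg_nonneg)
      ultimately have "p' - q' > 0 \<or> l = 0" using l by (smt (verit))
      then show False using pq' \<open>Re y < Re x\<close> by (auto simp: p'_def q'_def lin_def)
    qed
  qed
  show ?thesis using F inb ne by (simp add: Sc_def)
qed

lemma Fp_0:
  assumes "w \<in> Pc i j m" shows "Fp i j m (0,w) = w"
  using assms arc_eq by (cases w) (auto simp: Fp_def lin_def Pc_def inP_def)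

lemma Fp_1:
  assumes idx: "(i,j,m) \<in> Idx k" and k: "k \<ge> 3" and w: "w \<in> Sc k" "w \<in> Pc i j m"
  shows "Fp i j m (1,w) \<in> Gc k"
proof -
  obtain x y where we: "w = (x,y)" by fastforce
  have P: "inP i j m x y" "x \<noteq> y" using w we by (auto simp: Pc_def Sc_def)
  interpret pq "Re x" "Re y" using piece_pq P by blast
  have ik: "i < k" "j < k" using idx by (auto simp: Idx_def)
  have m: "(m = 0 \<and> i \<noteq> j) \<or> m = 1 \<or> m = 2" using idx by (auto simp: Idx_def)
  then show ?thesis
  proof (elim disjE conjE)
    assume "m = 0" "i \<noteq> j"
    then show ?thesis using ik phi_01 unfolding Gc_def
      by (intro CollectI exI[of _ i] exI[of _ j] exI[of _ "2 * phi (Re x) (Re y) - 1"])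
         (auto simp: Fp_def we lin_def tgt_def)
  next
    assume "m = 1"
    then show ?thesis using k unfolding Gc_def
      by (intro CollectI exI[of _ 0] exI[of _ 1] exI[of _ "-1"]) (auto simp: Fp_def we lin_def tgt_def)
  next
    assume "m = 2"
    then show ?thesis using k unfolding Gc_def
      by (intro CollectI exI[of _ 0] exI[of _ 1] exI[of _ "1"]) (auto simp: Fp_def we lin_def tgt_def)
  qed
qed

lemma Gc_sub: "Gc k \<subseteq> Sc k"
proof
  fix w assume "w \<in> Gc k"
  then obtain i j u where w: "w = (Xa i u, Xa j (-u))" "i<k" "j<k" "i\<noteq>j" "-1\<le>u" "u\<le>1"
    by (auto simp: Gc_def)
  have "Xa i u \<noteq> Xa j (-u)"
  proof
    assume e: "Xa i u = Xa j (-u)"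
    then have "u = 0" using Re_Xa by (metis add.inverse_inverse add_eq_0_iff2 equal_neg_zero)
    then show False using e w(4) by (metis Im_Xa abs_zero cancel_comm_monoid_add_class.diff_cancel
        diff_zero minus_zero mult.right_neutral of_nat_eq_iff)
  qed
  then show "w \<in> Sc k" using w Xa_in_arc[of u i] Xa_in_arc[of "-u" j] by (auto simp: Sc_def banana_arc)
qed

lemma Fp_fix:
  assumes "i \<noteq> j" "-1 \<le> u" "u \<le> 1"
  shows "Fp i j 0 (1, (Xa i u, Xa j (-u))) = (Xa i u, Xa j (-u))"
proof -
  have "phi u (-u) = (u+1)/2" using assms by (simp add: phi_def dL_def dR_def)
  then have e: "2 * phi u (-u) - 1 = u" "1 - 2 * phi u (-u) = -u" by simp_all
  have "Xa i (2 * phi u (-u) - 1) = Xa i u" "Xa j (1 - 2 * phi u (-u)) = Xa j (-u)" using e by metis+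
  then show ?thesis unfolding Fp_def lin_def tgt_def by simp
qed



lemma S_eqv_G:
  assumes k: "k \<ge> 3"
  shows "Sc k homotopy_eqv Gc k"
proof -
  obtain g where gc: "continuous_on ({0..1} \<times> Sc k) g"
    and gF: "\<And>i j m z. (i,j,m) \<in> Idx k \<Longrightarrow> z \<in> {0..1} \<times> Sc k \<Longrightarrow> snd z \<in> Pc i j m \<Longrightarrow> g z = Fp i j m z"
    using pasted by blast
  have gS: "g (l,w) \<in> Sc k" if A: "l \<in> {0..1}" "w \<in> Sc k" for l w
  proof -
    obtain i j m where "(i,j,m) \<in> Idx k" "w \<in> Pc i j m" using cover A by blast
    then show ?thesis using gF[of i j m "(l,w)"] Fp_in[of i j m k l w] A by auto
  qed
  have g0: "g (0,w) = w" if A: "w \<in> Sc k" for w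
  proof -
    obtain i j m where "(i,j,m) \<in> Idx k" "w \<in> Pc i j m" using cover A by blast
    then show ?thesis using gF[of i j m "(0,w)"] Fp_0[of w i j m] A by auto
  qed
  have g1: "g (1,w) \<in> Gc k" if A: "w \<in> Sc k" for w
  proof -
    obtain i j m where "(i,j,m) \<in> Idx k" "w \<in> Pc i j m" using cover A by blast
    then show ?thesis using gF[of i j m "(1,w)"] Fp_1[of i j m k w] A k by auto
  qed
  have gfix: "g (1,w) = w" if A: "w \<in> Gc k" for w
  proof -
    obtain i j u where w: "w = (Xa i u, Xa j (-u))" "i<k" "j<k" "i\<noteq>j" "-1\<le>u" "u\<le>1"
      using A by (auto simp: Gc_def)
    have "(i,j,0) \<in> Idx k" using w by (auto simp: Idx_def)
    moreover have "w \<in> Pc i j 0" using w Xa_in_arc by (auto simp: Pc_def inP_def)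
    moreover have "w \<in> Sc k" using A Gc_sub by blast
    ultimately show ?thesis using gF[of i j 0 "(1,w)"] Fp_fix[of i j u] w by auto
  qed
  let ?r = "\<lambda>w. g (1,w)"
  have rc: "continuous_on (Sc k) ?r"
    by (rule continuous_on_compose2[OF gc]) (auto intro!: continuous_intros)
  have ret: "retraction (Sc k) (Gc k) ?r"
    unfolding retraction_def using Gc_sub rc g1 gfix by auto
  have hom: "homotopic_with_canon (\<lambda>x. True) (Sc k) (Sc k) id ?r"
  proof (subst homotopic_with, simp, intro exI conjI)
    show "continuous_map (prod_topology (top_of_set {0..1}) (top_of_set (Sc k))) (top_of_set (Sc k)) g"
      using gc gS by auto
  qed (use g0 in auto)
  show ?thesis by (rule deformation_retract_imp_homotopy_eqv[OF hom ret])
qed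



lemma conf2_homeo:
  fixes B :: "'a::real_normed_vector set"
  shows "Conf 2 (top_of_set B) homeomorphic_space top_of_set {z. fst z \<in> B \<and> snd z \<in> B \<and> fst z \<noteq> snd z}"
proof -
  let ?P = "product_topology (\<lambda>_. top_of_set B) {..<2::nat}"
  let ?C = "{x \<in> topspace ?P. \<forall>i<2. \<forall>j<2. i \<noteq> j \<longrightarrow> x i \<noteq> x j}"
  let ?S = "{z. fst z \<in> B \<and> snd z \<in> B \<and> fst z \<noteq> snd z}"
  let ?f = "\<lambda>x::nat \<Rightarrow> 'a. (x 0, x 1)"
  let ?g = "\<lambda>z::'a\<times>'a. (\<lambda>n::nat. if n = 0 then fst z else if n = 1 then snd z else undefined)"
  have tP: "topspace ?P = PiE {..<2} (\<lambda>_. B)" by simp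
  have C: "x \<in> ?C \<longleftrightarrow> x \<in> PiE {..<2} (\<lambda>_. B) \<and> x 0 \<noteq> x 1" for x
  proof -
    have "(\<forall>i<2. \<forall>j<2. i \<noteq> j \<longrightarrow> x i \<noteq> x j) \<longleftrightarrow> x 0 \<noteq> x (1::nat)"
    proof
      assume "\<forall>i<2. \<forall>j<2. i \<noteq> j \<longrightarrow> x i \<noteq> x j" then show "x 0 \<noteq> x 1" by force
    next
      assume a: "x 0 \<noteq> x 1"
      show "\<forall>i<2. \<forall>j<2. i \<noteq> j \<longrightarrow> x i \<noteq> x j"
      proof (intro allI impI)
        fix i j :: nat assume "i < 2" "j < 2" "i \<noteq> j"
        then have "(i = 0 \<and> j = 1) \<or> (i = 1 \<and> j = 0)" by auto
        then show "x i \<noteq> x j" using a by auto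
      qed
    qed
    then show ?thesis using tP by simp
  qed
  have "homeomorphic_maps (subtopology ?P ?C) (top_of_set ?S) ?f ?g"
    unfolding homeomorphic_maps_def
  proof (intro conjI ballI)
    have p0: "continuous_map ?P (top_of_set B) (\<lambda>x. x 0)"
      by (rule continuous_map_product_projection) simp
    have c0: "continuous_map (subtopology ?P ?C) euclidean (\<lambda>x. x 0)"
      using continuous_map_from_subtopology[OF continuous_map_into_fulltopology[OF p0]] .
    have p1: "continuous_map ?P (top_of_set B) (\<lambda>x. x 1)"
      by (rule continuous_map_product_projection) simp
    have c1: "continuous_map (subtopology ?P ?C) euclidean (\<lambda>x. x 1)"
      using continuous_map_from_subtopology[OF continuous_map_into_fulltopology[OF p1]] .
    have "continuous_map (subtopology ?P ?C) (prod_topology euclidean euclidean) ?f"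
      using c0 c1 by (rule continuous_map_pairedI)
    then have "continuous_map (subtopology ?P ?C) euclidean ?f" by simp
    moreover have "?f ` topspace (subtopology ?P ?C) \<subseteq> ?S"
    proof
      fix z assume "z \<in> ?f ` topspace (subtopology ?P ?C)"
      then obtain x where x0: "x \<in> topspace (subtopology ?P ?C)" "z = ?f x" by (rule imageE)
      then have x: "x \<in> ?C" "z = ?f x" by simp_all
      have "x \<in> PiE {..<2} (\<lambda>_. B)" "x 0 \<noteq> x 1" using C[THEN iffD1, OF x(1)] by simp_all
      then show "z \<in> ?S" using x(2) by (auto simp: PiE_iff)
    qed
    ultimately show "continuous_map (subtopology ?P ?C) (top_of_set ?S) ?f"
      by (subst continuous_map_in_subtopology) blast
  next
    have "continuous_map (top_of_set ?S) ?P ?g"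
      unfolding continuous_map_componentwise
    proof (intro conjI ballI)
      show "?g ` topspace (top_of_set ?S) \<subseteq> extensional {..<2}"
        by (auto simp: extensional_def)
      fix n :: nat assume "n \<in> {..<2}"
      then have "n = 0 \<or> n = 1" by auto
      then show "continuous_map (top_of_set ?S) (top_of_set B) (\<lambda>x. ?g x n)"
      proof (elim disjE)
        assume "n = 0" then show ?thesis by (simp add: continuous_on_fst continuous_on_id Pi_iff)
      next
        assume "n = 1" then show ?thesis by (simp add: continuous_on_snd continuous_on_id Pi_iff)
      qed
    qed
    moreover have "?g ` topspace (top_of_set ?S) \<subseteq> ?C"
    proof
      fix w assume "w \<in> ?g ` topspace (top_of_set ?S)"
      then obtain z where z0: "z \<in> topspace (top_of_set ?S)" "w = ?g z" by (rule imageE)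
      then have z: "z \<in> ?S" "w = ?g z" by simp_all
      have "w \<in> PiE {..<2} (\<lambda>_. B)" using z by (auto simp: PiE_iff extensional_def)
      moreover have "w 0 \<noteq> w 1" using z by auto
      ultimately show "w \<in> ?C" by (intro C[THEN iffD2] conjI)
    qed
    ultimately show "continuous_map (top_of_set ?S) (subtopology ?P ?C) ?g"
      by (subst continuous_map_in_subtopology) blast
  next
    fix x assume "x \<in> topspace (subtopology ?P ?C)"
    then have xC: "x \<in> ?C" unfolding topspace_subtopology by (rule IntD2)
    have x: "x \<in> PiE {..<2} (\<lambda>_. B)" using C[THEN iffD1, OF xC] by (rule conjunct1)
    show "?g (?f x) = x"
    proof
      fix n :: nat
      show "?g (?f x) n = x n"
      proof (cases "n < 2")
        case True then have "n = 0 \<or> n = 1" by auto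
        then show ?thesis by (elim disjE) simp_all
      next
        case False
        then have "n \<notin> {..<2}" by simp
        then have "x n = undefined" using PiE_arb[OF x] by blast
        then show ?thesis using False by simp
      qed
    qed
  next
    fix z assume "z \<in> topspace (top_of_set ?S)"
    show "?f (?g z) = z" by simp
  qed
  then show ?thesis unfolding Conf_def homeomorphic_space_def by (intro exI)
qed



lemma topspace_quotient_topology: "topspace (quotient_topology X q) = q ` topspace X"
proof
  show "topspace (quotient_topology X q) \<subseteq> q ` topspace X"
    using openin_topspace[of "quotient_topology X q"] unfolding openin_quotient_topology by blast
  have "openin (quotient_topology X q) (q ` topspace X)"
  proof -
    have "{x \<in> topspace X. q x \<in> q ` topspace X} = topspace X" by auto
    then show ?thesis unfolding openin_quotient_topology by simp
  qed
  then show "q ` topspace X \<subseteq> topspace (quotient_topology X q)" by (rule openin_subset)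
qed

lemma quotient_homeo:
  fixes F :: "'a \<Rightarrow> 'b::metric_space"
  assumes cpt: "compact_space X" and cont: "continuous_map X (top_of_set T) F"
    and Fq: "\<And>x. x \<in> topspace X \<Longrightarrow> F (q x) = F x"
    and img: "F ` topspace X = T" and inj: "inj_on F (q ` topspace X)"
  shows "quotient_topology X q homeomorphic_space top_of_set T"
proof -
  let ?Q = "quotient_topology X q"
  have tQ: "topspace ?Q = q ` topspace X" by (rule topspace_quotient_topology)
  have FqT: "F ` topspace ?Q = T" using tQ img Fq by (auto simp: image_iff)
  have pre: "{x \<in> topspace X. q x \<in> {y \<in> q ` topspace X. F y \<in> U}} = {x \<in> topspace X. F x \<in> U}" for U
    using Fq by auto metis
  have cQ: "continuous_map ?Q (top_of_set T) F"
    unfolding continuous_map_def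
  proof (intro conjI allI impI)
    show "F \<in> topspace ?Q \<rightarrow> topspace (top_of_set T)" using FqT by auto
    fix U assume "openin (top_of_set T) U"
    then have "openin X {x \<in> topspace X. F x \<in> U}" using cont by (simp add: continuous_map_def)
    then show "openin ?Q {y \<in> topspace ?Q. F y \<in> U}"
      unfolding openin_quotient_topology tQ pre by auto
  qed
  have clQ: "closed_map ?Q (top_of_set T) F"
    unfolding closed_map_def
  proof (intro allI impI)
    fix C assume C: "closedin ?Q C"
    then have Csub: "C \<subseteq> q ` topspace X" using closedin_subset tQ by blast
    have "openin ?Q (topspace ?Q - C)" using C by (simp add: closedin_def)
    then have "openin X {x \<in> topspace X. q x \<in> topspace ?Q - C}"
      by (simp add: openin_quotient_topology)
    then have "closedin X (topspace X - {x \<in> topspace X. q x \<in> topspace ?Q - C})" by blast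
    moreover have "topspace X - {x \<in> topspace X. q x \<in> topspace ?Q - C} = {x \<in> topspace X. q x \<in> C}"
      using tQ Csub by auto
    ultimately have "closedin X {x \<in> topspace X. q x \<in> C}" by simp
    then have "compactin X {x \<in> topspace X. q x \<in> C}" using cpt closedin_compact_space by blast
    then have "compactin (top_of_set T) (F ` {x \<in> topspace X. q x \<in> C})"
      using cont image_compactin by blast
    moreover have "F ` {x \<in> topspace X. q x \<in> C} = F ` C"
    proof
      show "F ` {x \<in> topspace X. q x \<in> C} \<subseteq> F ` C" using Fq by (auto simp: image_iff) (metis Fq)
      show "F ` C \<subseteq> F ` {x \<in> topspace X. q x \<in> C}"
      proof
        fix y assume "y \<in> F ` C"
        then obtain c where c: "c \<in> C" "y = F c" by blast
        then obtain x where "x \<in> topspace X" "c = q x" using Csub by blast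
        then show "y \<in> F ` {x \<in> topspace X. q x \<in> C}" using c Fq by (intro image_eqI[of _ _ x]) auto
      qed
    qed
    ultimately have "compactin (top_of_set T) (F ` C)" by simp
    moreover have "Hausdorff_space (top_of_set T)"
      by (intro Hausdorff_space_subtopology Hausdorff_space_euclidean)
    ultimately show "closedin (top_of_set T) (F ` C)" using compactin_imp_closedin by blast
  qed
  have "homeomorphic_map ?Q (top_of_set T) F"
    by (rule bijective_closed_imp_homeomorphic_map[OF cQ clQ]) (use FqT inj tQ in auto)
  then show ?thesis by (rule homeomorphic_map_imp_homeomorphic_space)
qed



definition Pl :: "nat \<Rightarrow> (nat \<times> nat) list" where
  "Pl k = filter (\<lambda>p. fst p \<noteq> snd p) (List.product [0..<k] [0..<k])"

definition Eg :: "nat \<Rightarrow> (nat \<times> nat) list" where "Eg k = map (\<lambda>_. (0,1)) (Pl k)"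

definition Fg :: "nat \<Rightarrow> nat \<times> real \<Rightarrow> complex \<times> complex" where
  "Fg k p = (if even (fst p) then (Xa (fst (Pl k ! (fst p div 2))) (2 * snd p - 1),
                                   Xa (snd (Pl k ! (fst p div 2))) (1 - 2 * snd p))
             else if fst p = 1 then (-1, 1) else (1, -1))"

lemma set_Pl: "set (Pl k) = {(i,j). i<k \<and> j<k \<and> i\<noteq>j}"
  by (auto simp: Pl_def)

lemma distinct_Pl: "distinct (Pl k)"
  unfolding Pl_def by (simp add: distinct_product)

lemma length_Pl: assumes "k \<ge> 2" shows "length (Pl k) \<ge> k"
proof -
  let ?f = "\<lambda>i. (i, (i+1) mod k)"
  have ne: "(i+1) mod k \<noteq> i" if "i < k" for i
  proof (cases "i + 1 < k")
    case True then show ?thesis by simp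
  next
    case False then have "i + 1 = k" using that by simp
    then show ?thesis using assms by auto
  qed
  have ne': "i \<noteq> Suc i mod k" if "i < k" for i using ne[OF that] by simp
  have "?f ` {..<k} \<subseteq> set (Pl k)"
    using assms ne' by (auto simp: set_Pl)
  moreover have "card (?f ` {..<k}) = k" by (subst card_image) (auto simp: inj_on_def)
  ultimately have "k \<le> card (set (Pl k))" by (metis card_mono finite_set)
  then show ?thesis using distinct_card[OF distinct_Pl] by simp
qed

lemma length_Eg[simp]: "length (Eg k) = length (Pl k)" by (simp add: Eg_def)

lemma cells_eq: "graph_cells {0,1} (Eg k) = {(2*i, t) | i t. i < length (Pl k) \<and> 0 \<le> t \<and> t \<le> 1} \<union> {(1,0),(3,0)}"
  by (auto simp: graph_cells_def)

lemma Fq: "p \<in> graph_cells {0,1} (Eg k) \<Longrightarrow> Fg k (graph_glue (Eg k) p) = Fg k p"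
  unfolding cells_eq
  by (auto simp: graph_glue_def Let_def Fg_def Eg_def)

lemma Fg_img: "Fg k ` graph_cells {0,1} (Eg k) = Gc k" if "k \<ge> 2"
proof
  show "Fg k ` graph_cells {0,1} (Eg k) \<subseteq> Gc k"
  proof
    fix y assume "y \<in> Fg k ` graph_cells {0,1} (Eg k)"
    then obtain p where p: "p \<in> graph_cells {0,1} (Eg k)" "y = Fg k p" by blast
    from p(1) consider (e) i t where "p = (2*i,t)" "i < length (Pl k)" "0 \<le> t" "t \<le> 1"
      | (v1) "p = (1,0)" | (v3) "p = (3,0)" unfolding cells_eq by blast
    then show "y \<in> Gc k"
    proof cases
      case e
      obtain a b where ab: "Pl k ! i = (a,b)" by fastforce
      have "(a,b) \<in> set (Pl k)" using ab e(2) by (metis nth_mem)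
      then have "a<k" "b<k" "a\<noteq>b" by (auto simp: set_Pl)
      then show ?thesis unfolding Gc_def using e ab p(2)
        by (intro CollectI exI[of _ a] exI[of _ b] exI[of _ "2*t-1"]) (auto simp: Fg_def)
    next
      case v1
      then show ?thesis unfolding Gc_def using that p(2)
        by (intro CollectI exI[of _ 0] exI[of _ 1] exI[of _ "-1"]) (auto simp: Fg_def)
    next
      case v3
      then show ?thesis unfolding Gc_def using that p(2)
        by (intro CollectI exI[of _ 0] exI[of _ 1] exI[of _ "1"]) (auto simp: Fg_def)
    qed
  qed
  show "Gc k \<subseteq> Fg k ` graph_cells {0,1} (Eg k)"
  proof
    fix y assume "y \<in> Gc k"
    then obtain a b u where y: "y = (Xa a u, Xa b (-u))" "a<k" "b<k" "a\<noteq>b" "-1\<le>u" "u\<le>1"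
      by (auto simp: Gc_def)
    then have "(a,b) \<in> set (Pl k)" by (auto simp: set_Pl)
    then obtain m where m: "m < length (Pl k)" "Pl k ! m = (a,b)" by (metis in_set_conv_nth)
    have e1: "2 * ((u+1)/2) - 1 = u" "1 - 2 * ((u+1)/2) = -u" by (simp_all add: field_simps)
    have "Fg k (2*m, (u+1)/2) = (Xa a (2 * ((u+1)/2) - 1), Xa b (1 - 2 * ((u+1)/2)))"
      using m unfolding Fg_def by simp
    then have "Fg k (2*m, (u+1)/2) = y" unfolding e1 y by simp
    moreover have "(2*m, (u+1)/2) \<in> graph_cells {0,1} (Eg k)" unfolding cells_eq using m y
      by (intro UnI1 CollectI exI[of _ m] exI[of _ "(u+1)/2"]) auto
    ultimately show "y \<in> Fg k ` graph_cells {0,1} (Eg k)" by (metis image_eqI)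
  qed
qed

lemma glue_img: "graph_glue (Eg k) ` graph_cells {0,1} (Eg k) \<subseteq>
   {(2*i, t) | i t. i < length (Pl k) \<and> 0 < t \<and> t < 1} \<union> {(1,0),(3,0)}"
  unfolding cells_eq by (auto simp: graph_glue_def Let_def Eg_def)

lemma Fg_inj: "inj_on (Fg k) ({(2*i, t) | i t. i < length (Pl k) \<and> 0 < t \<and> t < 1} \<union> {(1,0),(3,0)})"
proof (rule inj_onI)
  fix p p' assume p: "p \<in> {(2*i, t) | i t. i < length (Pl k) \<and> 0 < t \<and> t < 1} \<union> {(1,0),(3,0)}"
    and p': "p' \<in> {(2*i, t) | i t. i < length (Pl k) \<and> 0 < t \<and> t < 1} \<union> {(1,0),(3,0)}"
    and eq: "Fg k p = Fg k p'"
  have edge_re: "\<bar>Re (fst (Fg k (2*i,t)))\<bar> < 1" if "0 < t" "t < 1" for i t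
    using that by (simp add: Fg_def)
  from p consider (e) i t where "p = (2*i,t)" "i < length (Pl k)" "0 < t" "t < 1"
    | (v) "p = (1,0) \<or> p = (3,0)" by blast
  then show "p = p'"
  proof cases
    case e
    from p' consider (e') i' t' where "p' = (2*i',t')" "i' < length (Pl k)" "0 < t'" "t' < 1"
      | (v') "p' = (1,0) \<or> p' = (3,0)" by blast
    then show ?thesis
    proof cases
      case e'
      obtain a b where ab: "Pl k ! i = (a,b)" by fastforce
      obtain a' b' where ab': "Pl k ! i' = (a',b')" by fastforce
      have E1: "Xa a (2*t-1) = Xa a' (2*t'-1)" "Xa b (1-2*t) = Xa b' (1-2*t')"
        using eq e e' ab ab' by (simp_all add: Fg_def)
      then have "2*t-1 = 2*t'-1" using Re_Xa by metis
      then have tt: "t = t'" by simp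
      have n0: "1 - \<bar>2*t-1\<bar> \<noteq> 0" "1 - \<bar>1-2*t\<bar> \<noteq> 0" using e by auto
      have "real a * (1 - \<bar>2*t-1\<bar>) = real a' * (1 - \<bar>2*t-1\<bar>)" using E1(1) tt Im_Xa by metis
      then have "a = a'" using n0 by simp
      moreover have "real b * (1 - \<bar>1-2*t\<bar>) = real b' * (1 - \<bar>1-2*t\<bar>)" using E1(2) tt Im_Xa by metis
      then have "b = b'" using n0 by simp
      ultimately have "Pl k ! i = Pl k ! i'" using ab ab' by simp
      then have "i = i'" using nth_eq_iff_index_eq[OF distinct_Pl] e e' by blast
      then show ?thesis using e e' tt by simp
    next
      case v'
      then have "\<bar>Re (fst (Fg k p'))\<bar> = 1" by (auto simp: Fg_def)
      moreover have "\<bar>Re (fst (Fg k p))\<bar> < 1" using e edge_re by simp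
      ultimately show ?thesis using eq by simp
    qed
  next
    case v
    from p' consider (e') i' t' where "p' = (2*i',t')" "i' < length (Pl k)" "0 < t'" "t' < 1"
      | (v') "p' = (1,0) \<or> p' = (3,0)" by blast
    then show ?thesis
    proof cases
      case e'
      then have "\<bar>Re (fst (Fg k p'))\<bar> < 1" using edge_re by simp
      moreover have "\<bar>Re (fst (Fg k p))\<bar> = 1" using v by (auto simp: Fg_def)
      ultimately show ?thesis using eq by simp
    next
      case v'
      then show ?thesis using v eq by (auto simp: Fg_def)
    qed
  qed
qed

lemma cont_Fg: "continuous_map (graph_cells_top {0,1} (Eg k)) euclidean (Fg k)"
proof -
  let ?X = "prod_topology (discrete_topology (UNIV::nat set)) euclideanreal"
  let ?C = "graph_cells {0,1} (Eg k)"
  let ?N = "2 * length (Pl k) + 4"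
  have hc: "continuous_map ?X euclidean (\<lambda>p. Fg k (n, snd p))" for n
  proof -
    have "continuous_on UNIV (\<lambda>t. Fg k (n,t))"
      by (cases "even n") (simp_all add: Fg_def continuous_intros)
    then have cm: "continuous_map euclideanreal euclidean (\<lambda>t. Fg k (n,t))" by simp
    have "continuous_map ?X euclidean ((\<lambda>t. Fg k (n,t)) \<circ> snd)"
      by (rule continuous_map_compose[OF continuous_map_snd cm])
    then show ?thesis unfolding o_def .
  qed
  show ?thesis unfolding graph_cells_top_def
  proof (rule pasting_lemma_closed[where I = "{..<?N}" and T = "\<lambda>n. ?C \<inter> ({n} \<times> UNIV)" and f = "\<lambda>n. Fg k"])
    show "finite {..<?N}" by simp
  next
    fix n assume "n \<in> {..<?N}"
    show "closedin (subtopology ?X ?C) (?C \<inter> ({n} \<times> UNIV))"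
      by (rule closedin_subtopology_Int_closed) (simp add: closedin_prod_Times_iff)
    have "continuous_map (subtopology (subtopology ?X ?C) (?C \<inter> ({n} \<times> UNIV))) euclidean (\<lambda>p. Fg k (n, snd p))"
      using hc[of n] by (intro continuous_map_from_subtopology)
    then show "continuous_map (subtopology (subtopology ?X ?C) (?C \<inter> ({n} \<times> UNIV))) euclidean (Fg k)"
      by (rule continuous_map_eq) auto
  next
    fix x assume "x \<in> topspace (subtopology ?X ?C)"
    then have x: "x \<in> ?C" by simp
    then have "fst x < ?N" unfolding cells_eq by auto
    then show "\<exists>j. j \<in> {..<?N} \<and> x \<in> ?C \<inter> ({j} \<times> UNIV) \<and> Fg k x = Fg k x"
      using x by (intro exI[of _ "fst x"]) (auto simp: mem_Times_iff)
  qed auto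
qed

lemma compact_cells: "compact_space (graph_cells_top {0,1} (Eg k))"
proof -
  let ?X = "prod_topology (discrete_topology (UNIV::nat set)) euclideanreal"
  have e: "graph_cells {0,1} (Eg k) = \<Union>((\<lambda>m. {2*m} \<times> {0..1}) ` {..<length (Pl k)}) \<union> {(1,0)} \<union> {(3,0)}"
    unfolding cells_eq by auto
  have "compactin ?X (\<Union>((\<lambda>m. {2*m} \<times> {0..1::real}) ` {..<length (Pl k)}))"
    by (rule compactin_Union) (auto simp: compactin_Times)
  then have "compactin ?X (graph_cells {0,1} (Eg k))"
    unfolding e by (intro compactin_Un) auto
  then show ?thesis unfolding graph_cells_top_def by (rule compact_space_subtopology)
qed

lemma connected_Gc: "connected (Gc k)"
proof -
  let ?A = "\<lambda>ab. (\<lambda>u. (Xa (fst ab) u, Xa (snd ab) (-u))) ` {-1..1::real}"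
  have e: "Gc k = \<Union>(?A ` set (Pl k))"
  proof
    show "Gc k \<subseteq> \<Union>(?A ` set (Pl k))"
    proof
      fix y assume "y \<in> Gc k"
      then obtain a b u where y: "y = (Xa a u, Xa b (-u))" "a<k" "b<k" "a\<noteq>b" "-1\<le>u" "u\<le>1"
        by (auto simp: Gc_def)
      then have "(a,b) \<in> set (Pl k)" by (simp add: set_Pl)
      moreover have "y \<in> ?A (a,b)" using y by auto
      ultimately show "y \<in> \<Union>(?A ` set (Pl k))" by blast
    qed
    show "\<Union>(?A ` set (Pl k)) \<subseteq> Gc k"
    proof
      fix y assume "y \<in> \<Union>(?A ` set (Pl k))"
      then obtain ab u where ab: "ab \<in> set (Pl k)" "u \<in> {-1..1}" "y = (Xa (fst ab) u, Xa (snd ab) (-u))" by blast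
      then show "y \<in> Gc k" unfolding Gc_def
        by (intro CollectI exI[of _ "fst ab"] exI[of _ "snd ab"] exI[of _ u]) (auto simp: set_Pl)
    qed
  qed
  show ?thesis unfolding e
  proof (rule connected_Union)
    fix S assume "S \<in> ?A ` set (Pl k)"
    then obtain ab where "S = ?A ab" by blast
    then show "connected S"
      by (simp only:) (intro connected_continuous_image connected_Icc continuous_intros)
  next
    have "(-1, 1) \<in> \<Inter>(?A ` set (Pl k))"
    proof
      fix ab assume "ab \<in> set (Pl k)"
      have "(Xa (fst ab) (-1), Xa (snd ab) (- (-1))) \<in> ?A ab" by (rule imageI) simp
      then show "(-1,1) \<in> ?A ab" by simp
    qed
    then show "\<Inter>(?A ` set (Pl k)) \<noteq> {}" by blast
  qed
qed

lemma topspace_cells: "topspace (graph_cells_top V E) = graph_cells V E"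
  by (simp add: graph_cells_top_def)

theorem mainTheorem5:
  fixes k :: nat
  assumes "k \<ge> 3"
  shows "\<exists>V E. fin_graph V E \<and> connected_space (graph_realization V E)
           \<and> graph_betti1 V E \<ge> int k - 1
           \<and> Conf 2 (subtopology euclidean (banana k)) homotopy_equivalent_space graph_realization V E"
proof (intro exI conjI)
  have k2: "k \<ge> 2" using assms by simp
  show "fin_graph {0,1} (Eg k)" by (auto simp: fin_graph_def Eg_def)
  have cF: "continuous_map (graph_cells_top {0,1} (Eg k)) (top_of_set (Gc k)) (Fg k)"
    using cont_Fg[of k] Fg_img[OF k2] topspace_cells[of "{0,1}" "Eg k"]
    by (subst continuous_map_in_subtopology) (simp add: image_subset_iff_funcset[symmetric])
  have R: "graph_realization {0,1} (Eg k) homeomorphic_space top_of_set (Gc k)"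
    unfolding graph_realization_def
  proof (rule quotient_homeo[OF compact_cells cF])
    show "\<And>x. x \<in> topspace (graph_cells_top {0,1} (Eg k)) \<Longrightarrow> Fg k (graph_glue (Eg k) x) = Fg k x"
      using Fq topspace_cells by blast
    show "Fg k ` topspace (graph_cells_top {0,1} (Eg k)) = Gc k"
      using Fg_img[OF k2] topspace_cells by metis
    show "inj_on (Fg k) (graph_glue (Eg k) ` topspace (graph_cells_top {0,1} (Eg k)))"
      using inj_on_subset[OF Fg_inj glue_img] topspace_cells by metis
  qed
  have cG: "connected_space (top_of_set (Gc k))"
    using connected_Gc[of k] by (simp add: connected_space_subtopology)
  show conn: "connected_space (graph_realization {0,1} (Eg k))"
    using homeomorphic_connected_space[OF R] cG by simp
  have "(-1, 1) \<in> Gc k" unfolding Gc_def using assms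
    by (intro CollectI exI[of _ 0] exI[of _ 1] exI[of _ "-1"]) auto
  then have "top_of_set (Gc k) \<noteq> trivial_topology" by (metis empty_iff topspace_discrete_topology topspace_euclidean_subtopology)
  then have nt: "graph_realization {0,1} (Eg k) \<noteq> trivial_topology"
    using homeomorphic_empty_space[OF R] by simp
  have "card (connected_components_of (graph_realization {0,1} (Eg k))) = 1"
    using connected_components_of_connected_space[OF conn] nt by simp
  then show "graph_betti1 {0,1} (Eg k) \<ge> int k - 1"
    using length_Pl[OF k2] by (simp add: graph_betti1_def)
  have A: "Conf 2 (subtopology euclidean (banana k)) homeomorphic_space top_of_set (Sc k)"
    using conf2_homeo[of "banana k"] by (simp add: Sc_def)
  have B: "top_of_set (Sc k) homotopy_equivalent_space top_of_set (Gc k)"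
    using S_eqv_G[OF assms] .
  have C: "top_of_set (Gc k) homotopy_equivalent_space graph_realization {0,1} (Eg k)"
    using R homeomorphic_space_sym homeomorphic_imp_homotopy_equivalent_space by blast
  show "Conf 2 (subtopology euclidean (banana k)) homotopy_equivalent_space graph_realization {0,1} (Eg k)"
    using homotopy_eqv_trans[OF homotopy_eqv_trans[OF homeomorphic_imp_homotopy_equivalent_space[OF A] B] C] .
qed


end
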